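(* Let $d\in\mathbb{N}$ and $k\in\mathbb{N}$. Suppose that $f\in\mathcal{G}_d$ is log-$k$-affine and that $\operatorname{supp} f\in\mathcal{P}$. Then there exist $\kappa(f)\leq k$, vectors $\alpha_1,\dotsc,\alpha_{\kappa(f)}\in\mathbb{R}^d$, scalars $\beta_1,\dotsc,\beta_{\kappa(f)}\in\mathbb{R}$ and a polyhedral subdivision $E_1,\dotsc,E_{\kappa(f)}$ of $\operatorname{supp} f$ such that $f(x)=\exp(\alpha_j^\top x+\beta_j)$ for all $x\in E_j$ and all $j$, and $\alpha_i\neq\alpha_j$ whenever $i\neq j$. Moreover, the triples $(\alpha_j,\beta_j,E_j)_{j=1}^{\kappa(f)}$ are unique up to reordering. In addition, if $\operatorname{supp} f\in\mathcal{P}^m$ for some $m\in\mathbb{N}\cup\{0\}$, then $E_j\in\mathcal{P}^{k+m-1}$ for all $j$.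
   Context: $\mathcal{G}_d$ is the set of functions $e^{\phi}$ where $\phi:\mathbb{R}^d\to[-\infty,\infty)$ is upper semi-continuous and concave. For $f:\mathbb{R}^d\to\mathbb{R}$, $\operatorname{supp} f:=\{x: f(x)\neq 0\}$. A function $f\in\mathcal{G}_d$ is log-$k$-affine if there exist closed sets $E_1,\dotsc,E_k$ with $\operatorname{supp} f=\bigcup_{j=1}^k E_j$ and $\log f$ affine on each $E_j$. A polyhedral set is an intersection of finitely many closed half-spaces; $\mathbb{R}^d$ itself is regarded as a polyhedral set with 0 facets. A facet of a convex set $E$ is a set $E\cap H$ of affine dimension $\dim(E)-1$, where $H$ is an affine hyperplane supporting $E$. $\mathcal{P}$ denotes the collection of polyhedral subsets of $\mathbb{R}^d$ with non-empty interior, and $\mathcal{P}^m$ those elements of $\mathcal{P}$ with at most $m$ facets. A (polyhedral) subdivision of $P\in\mathcal{P}$ is a finite collection $E_1,\dotsc,E_\ell\in\mathcal{P}$ with $P=\bigcup_j E_j$ and such that $E_i\cap E_j$ is a common face of $E_i$ and $E_j$ for all $i,j$. *)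

theory Defs
  imports "HOL-Analysis.Analysis"
begin

definition usc_ereal :: "('a::topological_space \<Rightarrow> ereal) \<Rightarrow> bool" where
  "usc_ereal \<phi> \<longleftrightarrow> (\<forall>c::real. open {x. \<phi> x < ereal c})"

definition concave_ereal :: "('a::real_vector \<Rightarrow> ereal) \<Rightarrow> bool" where
  "concave_ereal \<phi> \<longleftrightarrow> (\<forall>x y. \<forall>t::real. 0 < t \<and> t < 1 \<longrightarrow>
      ereal t * \<phi> x + ereal (1 - t) * \<phi> y \<le> \<phi> (t *\<^sub>R x + (1 - t) *\<^sub>R y))"

definition G_class :: "('a::euclidean_space \<Rightarrow> real) set" where
  "G_class = {f. \<exists>\<phi> :: 'a \<Rightarrow> ereal. (\<forall>x. \<phi> x < \<infinity>) \<and> usc_ereal \<phi> \<and> concave_ereal \<phi> \<and>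
      (\<forall>x. f x = (if \<phi> x = - \<infinity> then 0 else exp (real_of_ereal (\<phi> x))))}"

definition supp :: "('a \<Rightarrow> real) \<Rightarrow> 'a set" where
  "supp f = {x. f x \<noteq> 0}"

definition log_affine_on :: "('a::euclidean_space \<Rightarrow> real) \<Rightarrow> 'a set \<Rightarrow> bool" where
  "log_affine_on f E \<longleftrightarrow> (\<exists>a b. \<forall>x\<in>E. ln (f x) = a \<bullet> x + b)"

definition log_k_affine :: "nat \<Rightarrow> ('a::euclidean_space \<Rightarrow> real) \<Rightarrow> bool" where
  "log_k_affine k f \<longleftrightarrow> f \<in> G_class \<and>
     (\<exists>E :: nat \<Rightarrow> 'a set. (\<forall>j<k. closed (E j)) \<and> supp f = (\<Union>j<k. E j) \<and>
        (\<forall>j<k. log_affine_on f (E j)))"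

definition is_facet :: "'a::euclidean_space set \<Rightarrow> 'a set \<Rightarrow> bool" where
  "is_facet E F \<longleftrightarrow> (\<exists>a b. a \<noteq> 0 \<and> E \<subseteq> {x. a \<bullet> x \<le> b} \<and> E \<inter> {x. a \<bullet> x = b} \<noteq> {} \<and>
       F = E \<inter> {x. a \<bullet> x = b} \<and> aff_dim F = aff_dim E - 1)"

definition Pcal :: "'a::euclidean_space set set" where
  "Pcal = {E. polyhedron E \<and> interior E \<noteq> {}}"

definition Pcal_m :: "nat \<Rightarrow> 'a::euclidean_space set set" where
  "Pcal_m m = {E. E \<in> Pcal \<and> finite {F. is_facet E F} \<and> card {F. is_facet E F} \<le> m}"

definition subdivision :: "'a::euclidean_space set \<Rightarrow> nat \<Rightarrow> (nat \<Rightarrow> 'a set) \<Rightarrow> bool" where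
  "subdivision P l E \<longleftrightarrow> (\<forall>j<l. E j \<in> Pcal) \<and> P = (\<Union>j<l. E j) \<and>
     (\<forall>i<l. \<forall>j<l. (E i \<inter> E j) face_of (E i) \<and> (E i \<inter> E j) face_of (E j))"

definition affine_rep :: "('a::euclidean_space \<Rightarrow> real) \<Rightarrow> nat \<Rightarrow> (nat \<Rightarrow> 'a) \<Rightarrow> (nat \<Rightarrow> real)
     \<Rightarrow> (nat \<Rightarrow> 'a set) \<Rightarrow> bool" where
  "affine_rep f \<kappa> \<alpha> \<beta> E \<longleftrightarrow> subdivision (supp f) \<kappa> E \<and>
     (\<forall>j<\<kappa>. \<forall>x\<in>E j. f x = exp (\<alpha> j \<bullet> x + \<beta> j)) \<and>
     (\<forall>i<\<kappa>. \<forall>j<\<kappa>. i \<noteq> j \<longrightarrow> \<alpha> i \<noteq> \<alpha> j)"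

end

theory Submission
  imports Defs
begin


lemma baire_fin_aux:
  fixes F :: "nat \<Rightarrow> 'a::euclidean_space set"
  assumes "finite I"
  shows "\<forall>U. open U \<and> U \<noteq> {} \<and> U \<subseteq> (\<Union>i\<in>I. F i) \<and> (\<forall>i\<in>I. closed (F i)) \<longrightarrow>
           (\<exists>i\<in>I. interior (F i) \<inter> U \<noteq> {})"
  using assms
proof (induction I rule: finite_induct)
  case empty
  show ?case by simp
next
  case (insert i I)
  show ?case
  proof (intro allI impI)
    fix U assume H: "open U \<and> U \<noteq> {} \<and> U \<subseteq> (\<Union>i\<in>insert i I. F i) \<and> (\<forall>i\<in>insert i I. closed (F i))"
    have Uo: "open U" and Une: "U \<noteq> {}" and Usub: "U \<subseteq> (\<Union>i\<in>insert i I. F i)"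
      and cl: "\<forall>i\<in>insert i I. closed (F i)" using H by auto
    show "\<exists>i\<in>insert i I. interior (F i) \<inter> U \<noteq> {}"
    proof (cases "interior (F i) \<inter> U = {}")
      case False
      then show ?thesis by (intro bexI[of _ i]) simp_all
    next
      case True
      have nsub: "\<not> U \<subseteq> F i"
      proof
        assume "U \<subseteq> F i"
        then have "U \<subseteq> interior (F i)" using Uo by (rule interior_maximal)
        then have "interior (F i) \<inter> U = U" by (rule Int_absorb1)
        then show False using True Une by simp
      qed
      then have ne: "U - F i \<noteq> {}" by simp
      have clFi: "closed (F i)" using cl by simp
      have op: "open (U - F i)" using Uo clFi by (rule open_Diff)
      have sub: "U - F i \<subseteq> (\<Union>i\<in>I. F i)" using Usub by auto
      have clI: "\<forall>i\<in>I. closed (F i)" using cl by simp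
      obtain i' where i': "i' \<in> I" "interior (F i') \<inter> (U - F i) \<noteq> {}"
        using insert.IH op ne sub clI by blast
      have "interior (F i') \<inter> U \<noteq> {}" using i'(2) by auto
      then show ?thesis using i'(1) by (intro bexI[of _ i']) simp_all
    qed
  qed
qed

lemma baire_fin:
  fixes F :: "nat \<Rightarrow> 'a::euclidean_space set"
  assumes "finite I" "\<And>i. i \<in> I \<Longrightarrow> closed (F i)" "open U" "U \<noteq> {}" "U \<subseteq> (\<Union>i\<in>I. F i)"
  shows "\<exists>i\<in>I. interior (F i) \<inter> U \<noteq> {}"
  using baire_fin_aux[OF assms(1), of F] assms(2-5) by blast

lemma affine_eq_open:
  fixes a a' :: "'a::euclidean_space"
  assumes "open W" "W \<noteq> {}" "\<And>x. x \<in> W \<Longrightarrow> a \<bullet> x + b = a' \<bullet> x + b'"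
  shows "a = a' \<and> b = b'"
proof -
  obtain x0 where x0: "x0 \<in> W" using assms(2) by blast
  then obtain e where e: "e > 0" "ball x0 e \<subseteq> W" using assms(1) open_contains_ball by blast
  define v where "v = a - a'"
  have "v = 0"
  proof (rule ccontr)
    assume nz: "v \<noteq> 0"
    define t where "t = e / (2 * norm v)"
    have tpos: "t > 0" using nz e by (simp add: t_def)
    have "dist x0 (x0 + t *\<^sub>R v) = t * norm v" using tpos by (simp add: dist_norm)
    also have "\<dots> = e / 2" using nz by (simp add: t_def)
    finally have "x0 + t *\<^sub>R v \<in> W" using e by auto
    then have "a \<bullet> (x0 + t *\<^sub>R v) + b = a' \<bullet> (x0 + t *\<^sub>R v) + b'" by (rule assms(3))
    moreover have "a \<bullet> x0 + b = a' \<bullet> x0 + b'" using x0 assms(3) by blast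
    ultimately have "t * (v \<bullet> v) = 0" by (simp add: v_def algebra_simps inner_diff_left)
    then show False using tpos nz by simp
  qed
  then show ?thesis using assms(3)[OF x0] by (simp add: v_def)
qed




lemma is_facet_iff:
  fixes E :: "'a::euclidean_space set"
  assumes "polyhedron E"
  shows "is_facet E F \<longleftrightarrow> F facet_of E"
proof
  assume "is_facet E F"
  then obtain a b where ab: "a \<noteq> 0" "E \<subseteq> {x. a \<bullet> x \<le> b}" "E \<inter> {x. a \<bullet> x = b} \<noteq> {}"
     "F = E \<inter> {x. a \<bullet> x = b}" "aff_dim F = aff_dim E - 1" unfolding is_facet_def by blast
  have "F face_of E" unfolding ab(4)
    by (rule face_of_Int_supporting_hyperplane_le[OF polyhedron_imp_convex[OF assms]]) (use ab(2) in auto)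
  then show "F facet_of E" using ab by (simp add: facet_of_def)
next
  assume F: "F facet_of E"
  then obtain a b where ab: "a \<noteq> 0" "E \<subseteq> {x. a \<bullet> x \<le> b}" "F = E \<inter> {x. a \<bullet> x = b}"
    using facet_of_polyhedron[OF assms] by blast
  have "aff_dim F = aff_dim E - 1" "F \<noteq> {}" using F by (auto simp: facet_of_def)
  then show "is_facet E F" unfolding is_facet_def
    by (intro exI[of _ a] exI[of _ b]) (use ab in auto)
qed

lemma facets_eq:
  fixes E :: "'a::euclidean_space set"
  assumes "polyhedron E"
  shows "{F. is_facet E F} = {F. F facet_of E}"
  using is_facet_iff[OF assms] by blast

lemma mem_hs: "h = {x. c \<bullet> x \<le> d} \<Longrightarrow> (y \<in> h) = (c \<bullet> y \<le> (d::real))"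
  by simp

lemma facet_inj:
  fixes S :: "'a::euclidean_space set"
  assumes "finite F"
      and seq: "S = affine hull S \<inter> \<Inter>F"
      and faceq: "\<And>h. h \<in> F \<Longrightarrow> a h \<noteq> 0 \<and> h = {x. a h \<bullet> x \<le> b h}"
      and psub: "\<And>F'. F' \<subset> F \<Longrightarrow> S \<subset> affine hull S \<inter> \<Inter>F'"
      and h1: "h1 \<in> F" and h2: "h2 \<in> F"
      and eq: "S \<inter> {x. a h1 \<bullet> x = b h1} = S \<inter> {x. a h2 \<bullet> x = b h2}"
    shows "h1 = h2"
proof (rule ccontr)
  assume ne: "h1 \<noteq> h2"
  have "{} \<subset> F" using h1 by blast
  from psub[OF this] have "S \<subset> affine hull S \<inter> \<Inter>{}" .
  then have "S \<noteq> {}" by auto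
  have "polyhedron S"
    unfolding polyhedron_Int_affine by (metis \<open>finite F\<close> faceq seq)
  then have "convex S" by (rule polyhedron_imp_convex)
  with \<open>S \<noteq> {}\<close> rel_interior_eq_empty have "rel_interior S \<noteq> {}" by blast
  then obtain x where x: "x \<in> rel_interior S" by auto
  have ri: "rel_interior S = {x \<in> S. \<forall>h\<in>F. a h \<bullet> x < b h}"
    by (rule rel_interior_polyhedron_explicit [OF \<open>finite F\<close> seq faceq psub])
  with x have xS: "x \<in> S" and xlt: "\<And>h. h \<in> F \<Longrightarrow> a h \<bullet> x < b h" by auto
  have "S \<subset> affine hull S \<inter> \<Inter>(F - {h1})"
    using psub h1 by (metis Diff_disjoint Diff_subset insert_disjoint(2) psubsetI)
  then obtain z where zaff: "z \<in> affine hull S" and zint: "z \<in> \<Inter>(F - {h1})" and "z \<notin> S"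
    by force
  have "z \<notin> h1"
  proof
    assume "z \<in> h1"
    then have "z \<in> affine hull S \<inter> \<Inter>F" using zint zaff by auto
    then have "z \<in> S" by (subst seq)
    then show False using \<open>z \<notin> S\<close> by blast
  qed
  then have zgt: "a h1 \<bullet> z > b h1" using mem_hs[OF conjunct2[OF faceq[OF h1]], of z] by simp
  have zle: "a h \<bullet> z \<le> b h" if "h \<in> F" "h \<noteq> h1" for h
  proof -
    have "z \<in> h" using zint that by blast
    then show ?thesis using mem_hs[OF conjunct2[OF faceq[OF that(1)]], of z] by simp
  qed
  define t where "t = (b h1 - a h1 \<bullet> x) / (a h1 \<bullet> z - a h1 \<bullet> x)"
  have xl1: "a h1 \<bullet> x < b h1" using xlt h1 by auto
  have t0: "0 < t" and t1: "t < 1" using xl1 zgt by (auto simp: t_def field_simps)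
  define w where "w = (1 - t) *\<^sub>R x + t *\<^sub>R z"
  have lin: "a h \<bullet> w = (1 - t) * (a h \<bullet> x) + t * (a h \<bullet> z)" for h
    by (simp add: w_def inner_add_right)
  have wh1: "a h1 \<bullet> w = b h1"
  proof -
    have nz: "a h1 \<bullet> z - a h1 \<bullet> x \<noteq> 0" using zgt xl1 by simp
    have "a h1 \<bullet> w = a h1 \<bullet> x + t * (a h1 \<bullet> z - a h1 \<bullet> x)" unfolding lin by (simp add: algebra_simps)
    also have "t * (a h1 \<bullet> z - a h1 \<bullet> x) = b h1 - a h1 \<bullet> x" using nz by (simp add: t_def)
    finally show ?thesis by simp
  qed
  have wlt: "a h \<bullet> w < b h" if "h \<in> F" "h \<noteq> h1" for h
  proof -
    have "(1 - t) * (a h \<bullet> x) < (1 - t) * b h" using t1 xlt[OF that(1)] by simp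
    moreover have "t * (a h \<bullet> z) \<le> t * b h" using t0 zle[OF that] by (simp add: mult_left_mono)
    ultimately show ?thesis unfolding lin by (simp add: algebra_simps)
  qed
  have waff: "w \<in> affine hull S"
  proof -
    have "x \<in> affine hull S" by (rule hull_inc[OF xS])
    then show ?thesis unfolding w_def
      by (rule mem_affine[OF affine_affine_hull _ zaff]) simp
  qed
  have "w \<in> \<Inter>F"
  proof
    fix h assume "h \<in> F"
    show "w \<in> h"
    proof (cases "h = h1")
      case True then show ?thesis using mem_hs[OF conjunct2[OF faceq[OF h1]], of w] wh1 by simp
    next
      case False then show ?thesis using mem_hs[OF conjunct2[OF faceq[OF \<open>h \<in> F\<close>]], of w] wlt[OF \<open>h \<in> F\<close>] by simp
    qed
  qed
  with waff have "w \<in> affine hull S \<inter> \<Inter>F" by blast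
  then have "w \<in> S" by (subst seq)
  then have "w \<in> S \<inter> {x. a h2 \<bullet> x = b h2}" using eq wh1 by auto
  then show False using wlt[OF h2] ne by auto
qed

lemma facets_card_min:
  fixes S :: "'a::euclidean_space set"
  assumes "polyhedron S"
  obtains F where "finite F" "S = affine hull S \<inter> \<Inter>F"
     "\<And>h. h \<in> F \<Longrightarrow> \<exists>a b. a \<noteq> 0 \<and> h = {x. a \<bullet> x \<le> b}"
     "card F = card {C. C facet_of S}"
proof -
  obtain F where "finite F" and seq: "S = affine hull S \<inter> \<Inter>F"
             and faces: "\<And>h. h \<in> F \<Longrightarrow> \<exists>a b. a \<noteq> 0 \<and> h = {x. a \<bullet> x \<le> b}"
             and min: "\<And>F'. F' \<subset> F \<Longrightarrow> S \<subset> (affine hull S) \<inter> \<Inter>F'"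
    using assms by (simp add: polyhedron_Int_affine_minimal) meson
  obtain a b where ab: "\<And>h. h \<in> F \<Longrightarrow> a h \<noteq> 0 \<and> h = {x. a h \<bullet> x \<le> b h}"
    using faces by metis
  have "{C. C facet_of S} = (\<lambda>h. S \<inter> {x. a h \<bullet> x = b h}) ` F"
    using facet_of_polyhedron_explicit [OF \<open>finite F\<close> seq ab min] by auto
  moreover have "inj_on (\<lambda>h. S \<inter> {x. a h \<bullet> x = b h}) F"
    by (rule inj_onI) (rule facet_inj[OF \<open>finite F\<close> seq ab min])
  ultimately have cF: "card F = card {C. C facet_of S}" by (simp add: card_image)
  show ?thesis by (rule that[OF \<open>finite F\<close> seq faces cF])
qed

lemma facet_card_le:
  fixes P :: "'a::euclidean_space set"
  assumes G: "finite G" and Peq: "P = \<Inter>G"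
    and hs: "\<And>h. h \<in> G \<Longrightarrow> \<exists>a b. a \<noteq> 0 \<and> h = {x. a \<bullet> x \<le> b}"
    and int: "interior P \<noteq> {}"
  shows "card {C. C facet_of P} \<le> card G"
proof -
  have aff: "affine hull P = UNIV" using int by (rule affine_hull_nonempty_interior)
  obtain F where F: "F \<subseteq> G \<and> P = \<Inter>F" and Fmin: "\<And>F'. F' \<subseteq> G \<and> P = \<Inter>F' \<Longrightarrow> card F \<le> card F'"
    using ex_has_least_nat[of "\<lambda>F. F \<subseteq> G \<and> P = \<Inter>F" G card] Peq by blast
  have finF: "finite F" using F G finite_subset by blast
  have seq: "P = affine hull P \<inter> \<Inter>F" using F aff by simp
  have psub: "P \<subset> affine hull P \<inter> \<Inter>F'" if "F' \<subset> F" for F'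
  proof -
    have FF: "F' \<subseteq> F" using that by blast
    have "P \<subseteq> \<Inter>F'" using F Inter_anti_mono[OF FF] by simp
    moreover have "P \<noteq> \<Inter>F'"
    proof
      assume "P = \<Inter>F'"
      moreover have "F' \<subseteq> G" using F FF by blast
      ultimately have "card F \<le> card F'" using Fmin by blast
      moreover have "card F' < card F" using psubset_card_mono[OF finF that] .
      ultimately show False by simp
    qed
    ultimately show ?thesis using aff by auto
  qed
  obtain a b where ab: "\<And>h. h \<in> F \<Longrightarrow> a h \<noteq> 0 \<and> h = {x. a h \<bullet> x \<le> b h}"
  proof -
    have hsF: "\<And>h. h \<in> F \<Longrightarrow> \<exists>a b. a \<noteq> 0 \<and> h = {x. a \<bullet> x \<le> b}"
      using hs F by blast
    show ?thesis using hsF that by metis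
  qed
  have "{C. C facet_of P} \<subseteq> (\<lambda>h. P \<inter> {x. a h \<bullet> x = b h}) ` F"
    using facet_of_polyhedron_explicit [OF finF seq ab psub] by auto
  then have "card {C. C facet_of P} \<le> card F"
    by (meson card_image_le card_mono finF finite_imageI order_trans)
  also have "\<dots> \<le> card G" using F by (intro card_mono[OF G]) simp
  finally show ?thesis .
qed




lemma G_pos:
  assumes "f \<in> G_class" "x \<in> supp f"
  shows "f x > 0"
proof -
  obtain \<phi> :: "'a \<Rightarrow> ereal" where fe: "\<And>x. f x = (if \<phi> x = - \<infinity> then 0 else exp (real_of_ereal (\<phi> x)))"
    using assms(1) unfolding G_class_def by blast
  show ?thesis using assms(2) fe[of x] unfolding supp_def by (auto split: if_splits)
qed

lemma G_conc:
  assumes "f \<in> G_class" "x \<in> supp f" "y \<in> supp f" "0 < t" "t < 1"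
  shows "t *\<^sub>R x + (1 - t) *\<^sub>R y \<in> supp f \<and>
         t * ln (f x) + (1 - t) * ln (f y) \<le> ln (f (t *\<^sub>R x + (1 - t) *\<^sub>R y))"
proof -
  obtain \<phi> :: "'a \<Rightarrow> ereal" where fin: "\<And>x. \<phi> x < \<infinity>" and cc: "concave_ereal \<phi>"
    and fe: "\<And>x. f x = (if \<phi> x = - \<infinity> then 0 else exp (real_of_ereal (\<phi> x)))"
    using assms(1) unfolding G_class_def by blast
  have key: "\<phi> u = ereal (ln (f u))" if "u \<in> supp f" for u
  proof -
    have "\<phi> u \<noteq> - \<infinity>" using that fe[of u] unfolding supp_def by auto
    moreover have "\<phi> u \<noteq> \<infinity>" using fin[of u] by auto
    ultimately obtain r where r: "\<phi> u = ereal r" by (cases "\<phi> u") auto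
    then have "f u = exp r" using fe[of u] by simp
    then show ?thesis using r by simp
  qed
  define z where "z = t *\<^sub>R x + (1 - t) *\<^sub>R y"
  have "ereal t * \<phi> x + ereal (1 - t) * \<phi> y \<le> \<phi> z"
    using cc assms(4,5) unfolding concave_ereal_def z_def by blast
  then have le: "ereal (t * ln (f x) + (1 - t) * ln (f y)) \<le> \<phi> z"
    using key[OF assms(2)] key[OF assms(3)] by simp
  then have "\<phi> z \<noteq> - \<infinity>" by auto
  then have zs: "z \<in> supp f" using fe[of z] unfolding supp_def by simp
  then have "t * ln (f x) + (1 - t) * ln (f y) \<le> ln (f z)" using le key[OF zs] by simp
  then show ?thesis using zs unfolding z_def by simp
qed

lemma local_upper:
  fixes \<psi> :: "'a::euclidean_space \<Rightarrow> real"
  assumes conc: "\<And>x y t. x \<in> S \<Longrightarrow> y \<in> S \<Longrightarrow> 0 < t \<Longrightarrow> t < 1 \<Longrightarrow>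
        t * \<psi> x + (1 - t) * \<psi> y \<le> \<psi> (t *\<^sub>R x + (1 - t) *\<^sub>R y)"
    and ES: "E \<subseteq> S" and x0: "x0 \<in> interior E" and aff: "\<And>x. x \<in> E \<Longrightarrow> \<psi> x = a \<bullet> x + b"
    and y: "y \<in> S"
  shows "\<psi> y \<le> a \<bullet> y + b"
proof -
  have x0E: "x0 \<in> E" using x0 interior_subset by blast
  show ?thesis
proof (cases "y = x0")
  case True
  then show ?thesis using aff[OF x0E] by simp
next
  case False
  obtain e where e: "e > 0" "ball x0 e \<subseteq> E" using x0 unfolding mem_interior by blast
  define d where "d = norm (y - x0)"
  have d: "d > 0" using False by (simp add: d_def)
  define t where "t = min (1/2) (e / (2 * d))"
  have t0: "0 < t" using d e by (simp add: t_def)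
  have t1: "t < 1" by (simp add: t_def)
  have "t \<le> e / (2 * d)" by (simp add: t_def)
  then have "t * d \<le> e / (2 * d) * d" using d by (intro mult_right_mono) auto
  also have "\<dots> = e / 2" using d by simp
  finally have td: "t * d \<le> e / 2" .
  define z where "z = t *\<^sub>R y + (1 - t) *\<^sub>R x0"
  have "z - x0 = t *\<^sub>R (y - x0)" by (simp add: z_def algebra_simps)
  then have "norm (z - x0) = t * d" using t0 by (simp add: d_def)
  then have "dist x0 z = t * d" by (simp add: dist_norm norm_minus_commute)
  then have "z \<in> ball x0 e" using td e by simp
  then have zE: "z \<in> E" using e by blast
  have "t * \<psi> y + (1 - t) * \<psi> x0 \<le> \<psi> z"
    unfolding z_def by (rule conc[OF y _ t0 t1]) (use x0E ES in blast)
  also have "\<psi> z = t * (a \<bullet> y + b) + (1 - t) * (a \<bullet> x0 + b)"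
    using aff[OF zE] by (simp add: z_def inner_add_right algebra_simps)
  finally have "t * \<psi> y \<le> t * (a \<bullet> y + b)" using aff[OF x0E] by simp
  then show ?thesis using t0 by simp
qed
qed




definition rep :: "'a::euclidean_space set \<Rightarrow> ('a \<Rightarrow> real) \<Rightarrow> nat \<Rightarrow> (nat \<Rightarrow> 'a) \<Rightarrow> (nat \<Rightarrow> real)
     \<Rightarrow> (nat \<Rightarrow> 'a set) \<Rightarrow> bool" where
  "rep S f \<kappa> \<alpha> \<beta> E \<longleftrightarrow> (\<forall>j<\<kappa>. closed (E j) \<and> convex (E j) \<and> interior (E j) \<noteq> {}) \<and>
     S = (\<Union>j<\<kappa>. E j) \<and> (\<forall>j<\<kappa>. \<forall>x\<in>E j. f x = exp (\<alpha> j \<bullet> x + \<beta> j)) \<and>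
     (\<forall>i<\<kappa>. \<forall>j<\<kappa>. i \<noteq> j \<longrightarrow> \<alpha> i \<noteq> \<alpha> j)"

lemma rep_val: "rep S f \<kappa> \<alpha> \<beta> E \<Longrightarrow> j < \<kappa> \<Longrightarrow> x \<in> E j \<Longrightarrow> f x = exp (\<alpha> j \<bullet> x + \<beta> j)"
  unfolding rep_def by blast

lemma rep_closed: "rep S f \<kappa> \<alpha> \<beta> E \<Longrightarrow> j < \<kappa> \<Longrightarrow> closed (E j)"
  unfolding rep_def by blast

lemma rep_convex: "rep S f \<kappa> \<alpha> \<beta> E \<Longrightarrow> j < \<kappa> \<Longrightarrow> convex (E j)"
  unfolding rep_def by blast

lemma rep_int: "rep S f \<kappa> \<alpha> \<beta> E \<Longrightarrow> j < \<kappa> \<Longrightarrow> interior (E j) \<noteq> {}"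
  unfolding rep_def by blast

lemma rep_cover: "rep S f \<kappa> \<alpha> \<beta> E \<Longrightarrow> S = (\<Union>j<\<kappa>. E j)"
  unfolding rep_def by blast

lemma rep_sub: "rep S f \<kappa> \<alpha> \<beta> E \<Longrightarrow> j < \<kappa> \<Longrightarrow> E j \<subseteq> S"
  unfolding rep_def by blast

lemma rep_dist: "rep S f \<kappa> \<alpha> \<beta> E \<Longrightarrow> i < \<kappa> \<Longrightarrow> j < \<kappa> \<Longrightarrow> \<alpha> i = \<alpha> j \<Longrightarrow> i = j"
  unfolding rep_def by blast

lemma rep_M0:
  assumes R: "rep S f \<kappa> \<alpha> \<beta> E" and R': "rep S f \<kappa>' \<alpha>' \<beta>' E'"
    and i: "i < \<kappa>" and j: "j < \<kappa>'" and eq: "\<alpha> i = \<alpha>' j" "\<beta> i = \<beta>' j"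
  shows "E' j \<subseteq> E i"
proof -
  have cl: "\<And>l. l < \<kappa> \<Longrightarrow> closed (E l)" using rep_closed[OF R] .
  have int: "interior (E' j) \<subseteq> E i"
  proof (rule ccontr)
    assume nsub: "\<not> interior (E' j) \<subseteq> E i"
    define U where "U = interior (E' j) - E i"
    have Une: "U \<noteq> {}" using nsub unfolding U_def by blast
    have Uop: "open U" unfolding U_def using cl[OF i] by (simp add: open_Diff)
    have "U \<subseteq> E' j" unfolding U_def using interior_subset by blast
    also have "\<dots> \<subseteq> S" by (rule rep_sub[OF R' j])
    also have "\<dots> = (\<Union>l<\<kappa>. E l)" by (rule rep_cover[OF R])
    finally have "U \<subseteq> (\<Union>l<\<kappa>. E l)" .
    then have "U \<subseteq> (\<Union>l\<in>{..<\<kappa>} - {i}. E l)" unfolding U_def by blast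
    then obtain l where l: "l \<in> {..<\<kappa>} - {i}" "interior (E l) \<inter> U \<noteq> {}"
      using baire_fin[of "{..<\<kappa>} - {i}" E U] cl Uop Une by blast
    have lk: "l < \<kappa>" using l(1) by simp
    have "\<alpha> l = \<alpha>' j \<and> \<beta> l = \<beta>' j"
    proof (rule affine_eq_open[of "interior (E l) \<inter> U"])
      show "open (interior (E l) \<inter> U)" using Uop by auto
      show "interior (E l) \<inter> U \<noteq> {}" by fact
      fix x assume x: "x \<in> interior (E l) \<inter> U"
      then have "x \<in> E l" "x \<in> E' j" using interior_subset unfolding U_def by blast+
      then have "exp (\<alpha> l \<bullet> x + \<beta> l) = exp (\<alpha>' j \<bullet> x + \<beta>' j)"
        using rep_val[OF R lk, of x] rep_val[OF R' j, of x] by simp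
      then show "\<alpha> l \<bullet> x + \<beta> l = \<alpha>' j \<bullet> x + \<beta>' j" by simp
    qed
    then have "\<alpha> l = \<alpha> i" using eq by simp
    then have "l = i" using rep_dist[OF R lk i] by simp
    then show False using l(1) by simp
  qed
  have "E' j \<subseteq> closure (interior (E' j))"
    using convex_closure_interior[OF rep_convex[OF R' j] rep_int[OF R' j]] closure_subset by simp
  also have "\<dots> \<subseteq> closure (E i)" using int by (rule closure_mono)
  also have "\<dots> = E i" using cl[OF i] by simp
  finally show ?thesis .
qed

lemma rep_M1:
  assumes R: "rep S f \<kappa> \<alpha> \<beta> E" and R': "rep S f \<kappa>' \<alpha>' \<beta>' E'" and j: "j < \<kappa>'"
  shows "\<exists>i<\<kappa>. \<alpha> i = \<alpha>' j \<and> \<beta> i = \<beta>' j \<and> E i = E' j"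
proof -
  have cl: "\<And>l. l < \<kappa> \<Longrightarrow> closed (E l)" using rep_closed[OF R] .
  have ne: "interior (E' j) \<noteq> {}" by (rule rep_int[OF R' j])
  have "interior (E' j) \<subseteq> E' j" by (rule interior_subset)
  also have "\<dots> \<subseteq> S" by (rule rep_sub[OF R' j])
  also have "\<dots> = (\<Union>l<\<kappa>. E l)" by (rule rep_cover[OF R])
  finally have "interior (E' j) \<subseteq> (\<Union>l\<in>{..<\<kappa>}. E l)" .
  then obtain i where i: "i \<in> {..<\<kappa>}" "interior (E i) \<inter> interior (E' j) \<noteq> {}"
    using baire_fin[of "{..<\<kappa>}" E "interior (E' j)"] cl ne by blast
  have ik: "i < \<kappa>" using i(1) by simp
  have ab: "\<alpha> i = \<alpha>' j \<and> \<beta> i = \<beta>' j"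
  proof (rule affine_eq_open[of "interior (E i) \<inter> interior (E' j)"])
    show "open (interior (E i) \<inter> interior (E' j))" by auto
    show "interior (E i) \<inter> interior (E' j) \<noteq> {}" by fact
    fix x assume x: "x \<in> interior (E i) \<inter> interior (E' j)"
    then have "x \<in> E i" "x \<in> E' j" using interior_subset by blast+
    then have "exp (\<alpha> i \<bullet> x + \<beta> i) = exp (\<alpha>' j \<bullet> x + \<beta>' j)"
      using rep_val[OF R ik, of x] rep_val[OF R' j, of x] by simp
    then show "\<alpha> i \<bullet> x + \<beta> i = \<alpha>' j \<bullet> x + \<beta>' j" by simp
  qed
  have "E' j \<subseteq> E i" using rep_M0[OF R R' ik j] ab by simp
  moreover have "E i \<subseteq> E' j" using rep_M0[OF R' R j ik] ab by simp
  ultimately show ?thesis using ik ab by blast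
qed

lemma rep_unique:
  assumes R: "rep S f \<kappa> \<alpha> \<beta> E" and R': "rep S f \<kappa>' \<alpha>' \<beta>' E'"
  shows "\<kappa>' = \<kappa> \<and> (\<exists>\<sigma>. bij_betw \<sigma> {..<\<kappa>} {..<\<kappa>'} \<and>
          (\<forall>j<\<kappa>. \<alpha>' (\<sigma> j) = \<alpha> j \<and> \<beta>' (\<sigma> j) = \<beta> j \<and> E' (\<sigma> j) = E j))"
proof -
  define \<sigma> where "\<sigma> j = (SOME i. i < \<kappa>' \<and> \<alpha>' i = \<alpha> j \<and> \<beta>' i = \<beta> j \<and> E' i = E j)" for j
  have sig: "\<sigma> j < \<kappa>' \<and> \<alpha>' (\<sigma> j) = \<alpha> j \<and> \<beta>' (\<sigma> j) = \<beta> j \<and> E' (\<sigma> j) = E j" if "j < \<kappa>" for j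
  proof -
    have ex: "\<exists>i. i < \<kappa>' \<and> \<alpha>' i = \<alpha> j \<and> \<beta>' i = \<beta> j \<and> E' i = E j"
      using rep_M1[OF R' R that] by blast
    show ?thesis unfolding \<sigma>_def by (rule someI_ex[OF ex])
  qed
  have inj: "inj_on \<sigma> {..<\<kappa>}"
  proof (rule inj_onI)
    fix x y assume xy: "x \<in> {..<\<kappa>}" "y \<in> {..<\<kappa>}" "\<sigma> x = \<sigma> y"
    then have xk: "x < \<kappa>" and yk: "y < \<kappa>" by auto
    have "\<alpha> x = \<alpha>' (\<sigma> x)" using sig[OF xk] by simp
    also have "\<dots> = \<alpha>' (\<sigma> y)" using xy(3) by simp
    also have "\<dots> = \<alpha> y" using sig[OF yk] by simp
    finally show "x = y" by (rule rep_dist[OF R xk yk])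
  qed
  have sub1: "\<sigma> ` {..<\<kappa>} \<subseteq> {..<\<kappa>'}"
  proof (rule image_subsetI)
    fix x assume "x \<in> {..<\<kappa>}"
    then have "x < \<kappa>" by simp
    then show "\<sigma> x \<in> {..<\<kappa>'}" using conjunct1[OF sig] by simp
  qed
  have sub2: "{..<\<kappa>'} \<subseteq> \<sigma> ` {..<\<kappa>}"
  proof
    fix j assume "j \<in> {..<\<kappa>'}"
    then have jk: "j < \<kappa>'" by simp
    obtain i where i: "i < \<kappa>" "\<alpha> i = \<alpha>' j" using rep_M1[OF R R' jk] by blast
    have s1: "\<sigma> i < \<kappa>'" using sig[OF i(1)] by simp
    have "\<alpha>' (\<sigma> i) = \<alpha>' j" using sig[OF i(1)] i(2) by simp
    then have "\<sigma> i = j" by (rule rep_dist[OF R' s1 jk])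
    then show "j \<in> \<sigma> ` {..<\<kappa>}" using i(1) by auto
  qed
  have bij: "bij_betw \<sigma> {..<\<kappa>} {..<\<kappa>'}" unfolding bij_betw_def using inj sub1 sub2 by blast
  then have "card {..<\<kappa>} = card {..<\<kappa>'}" by (rule bij_betw_same_card)
  then have keq: "\<kappa>' = \<kappa>" by simp
  have all: "\<forall>j<\<kappa>. \<alpha>' (\<sigma> j) = \<alpha> j \<and> \<beta>' (\<sigma> j) = \<beta> j \<and> E' (\<sigma> j) = E j"
  proof (intro allI impI)
    fix j assume "j < \<kappa>"
    then show "\<alpha>' (\<sigma> j) = \<alpha> j \<and> \<beta>' (\<sigma> j) = \<beta> j \<and> E' (\<sigma> j) = E j" using sig[of j] by simp
  qed
  show ?thesis by (intro conjI keq exI[of _ \<sigma>] bij all)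
qed




theorem proposition1:
  fixes f :: "'a::euclidean_space \<Rightarrow> real" and k :: nat
  assumes "f \<in> G_class" and "log_k_affine k f" and "supp f \<in> Pcal"
  shows "\<exists>\<kappa> \<alpha> \<beta> E. \<kappa> \<le> k \<and> affine_rep f \<kappa> \<alpha> \<beta> E \<and>
     (\<forall>\<kappa>' \<alpha>' \<beta>' E'. affine_rep f \<kappa>' \<alpha>' \<beta>' E' \<longrightarrow>
        \<kappa>' = \<kappa> \<and> (\<exists>\<sigma>. bij_betw \<sigma> {..<\<kappa>} {..<\<kappa>'} \<and>
          (\<forall>j<\<kappa>. \<alpha>' (\<sigma> j) = \<alpha> j \<and> \<beta>' (\<sigma> j) = \<beta> j \<and> E' (\<sigma> j) = E j))) \<and>
     (\<forall>m::nat. supp f \<in> Pcal_m m \<longrightarrow> (\<forall>j<\<kappa>. E j \<in> Pcal_m (k + m - 1)))"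
proof -
  define S where "S = supp f"
  define \<psi> where "\<psi> x = ln (f x)" for x
  have fpos: "\<And>x. x \<in> S \<Longrightarrow> f x > 0" using G_pos[OF assms(1)] S_def by blast
  have conc: "\<And>x y t. x \<in> S \<Longrightarrow> y \<in> S \<Longrightarrow> 0 < t \<Longrightarrow> t < 1 \<Longrightarrow>
        t * \<psi> x + (1 - t) * \<psi> y \<le> \<psi> (t *\<^sub>R x + (1 - t) *\<^sub>R y)"
    using G_conc[OF assms(1)] unfolding S_def \<psi>_def by blast
  have Spoly: "polyhedron S" and Sint: "interior S \<noteq> {}" using assms(3) by (auto simp: S_def Pcal_def)
  have Sconv: "convex S" using Spoly by (rule polyhedron_imp_convex)
  obtain E where Ecl: "\<And>j. j < k \<Longrightarrow> closed (E j)" and Sun: "S = (\<Union>j<k. E j)"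
      and Eaff: "\<And>j. j < k \<Longrightarrow> log_affine_on f (E j)"
    using assms(2) unfolding log_k_affine_def S_def by blast
  have "\<forall>j. \<exists>p. j < k \<longrightarrow> (\<forall>x\<in>E j. \<psi> x = fst p \<bullet> x + snd p)"
  proof
    fix j
    show "\<exists>p. j < k \<longrightarrow> (\<forall>x\<in>E j. \<psi> x = fst p \<bullet> x + snd p)"
    proof (cases "j < k")
      case True
      then obtain a b where "\<forall>x\<in>E j. ln (f x) = a \<bullet> x + b" using Eaff unfolding log_affine_on_def by blast
      then show ?thesis unfolding \<psi>_def by (intro exI[of _ "(a, b)"]) simp
    qed simp
  qed
  then obtain g where g: "\<And>j x. j < k \<Longrightarrow> x \<in> E j \<Longrightarrow> \<psi> x = fst (g j) \<bullet> x + snd (g j)"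
    by metis
  define a where "a j = fst (g j)" for j
  define b where "b j = snd (g j)" for j
  have ab: "\<And>j x. j < k \<Longrightarrow> x \<in> E j \<Longrightarrow> \<psi> x = a j \<bullet> x + b j" using g a_def b_def by simp
  have EsubS: "\<And>j. j < k \<Longrightarrow> E j \<subseteq> S" using Sun by blast
  define J where "J = {j. j < k \<and> interior (E j) \<noteq> {}}"
  have finJ: "finite J" unfolding J_def by simp
  have Jk: "J \<subseteq> {..<k}" unfolding J_def by auto
  have coverJ: "S \<subseteq> (\<Union>j\<in>J. E j)"
  proof -
    define K where "K = (\<Union>j\<in>J. E j)"
    have Kcl: "closed K" unfolding K_def using finJ Ecl J_def by (intro closed_UN) auto
    have intK: "interior S \<subseteq> K"
    proof (rule ccontr)
      assume nsub: "\<not> interior S \<subseteq> K"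
      define U where "U = interior S - K"
      have Uop: "open U" unfolding U_def using Kcl by (simp add: open_Diff)
      have Une: "U \<noteq> {}" using nsub U_def by blast
      have "U \<subseteq> S" unfolding U_def using interior_subset by blast
      then have "U \<subseteq> (\<Union>j\<in>{..<k}. E j)" using Sun by simp
      then obtain j where j: "j \<in> {..<k}" "interior (E j) \<inter> U \<noteq> {}"
        using baire_fin[of "{..<k}" E U] Ecl Uop Une by blast
      then have "j \<in> J" unfolding J_def by auto
      then have "E j \<subseteq> K" unfolding K_def by blast
      then show False using j(2) interior_subset unfolding U_def by blast
    qed
    have "S \<subseteq> closure S" by (rule closure_subset)
    also have "\<dots> = closure (interior S)" using convex_closure_interior[OF Sconv Sint] by simp
    also have "\<dots> \<subseteq> K" using intK Kcl by (simp add: closure_minimal)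
    finally show ?thesis unfolding K_def .
  qed
  have UB0: "\<psi> y \<le> a j \<bullet> y + b j" if "j \<in> J" "y \<in> S" for j y
  proof -
    have jk: "j < k" and ne: "interior (E j) \<noteq> {}" using that unfolding J_def by auto
    then obtain x0 where "x0 \<in> interior (E j)" by blast
    then show ?thesis using local_upper[OF conc EsubS[OF jk] _ ab[OF jk] that(2)] by blast
  qed
  have Ble: "b j \<le> b j'" if "j \<in> J" "j' \<in> J" "a j = a j'" for j j'
  proof -
    have jk: "j < k" and ne: "interior (E j) \<noteq> {}" using that unfolding J_def by auto
    then obtain x0 where "x0 \<in> interior (E j)" by blast
    then have x0E: "x0 \<in> E j" using interior_subset by blast
    then have "a j \<bullet> x0 + b j \<le> a j' \<bullet> x0 + b j'"
      using UB0[OF that(2), of x0] ab[OF jk x0E] EsubS[OF jk] by auto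
    then show ?thesis using that(3) by simp
  qed
  have Bsame: "b j = b j'" if "j \<in> J" "j' \<in> J" "a j = a j'" for j j'
    using Ble[OF that] Ble[OF that(2,1) that(3)[symmetric]] by simp
  define A where "A = a ` J"
  define \<kappa> where "\<kappa> = card A"
  have finA: "finite A" unfolding A_def using finJ by simp
  obtain \<alpha> where bij: "bij_betw \<alpha> {..<\<kappa>} A"
    using ex_bij_betw_nat_finite[OF finA] unfolding \<kappa>_def atLeast0LessThan by blast
  define \<beta> where "\<beta> i = b (SOME j. j \<in> J \<and> a j = \<alpha> i)" for i
  have rep_i: "\<exists>j\<in>J. a j = \<alpha> i \<and> b j = \<beta> i" if "i < \<kappa>" for i
  proof -
    have "\<alpha> i \<in> A" using bij that by (auto dest: bij_betwE)
    then have ex: "\<exists>j. j \<in> J \<and> a j = \<alpha> i" unfolding A_def by (auto simp: image_iff)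
    have "(SOME j. j \<in> J \<and> a j = \<alpha> i) \<in> J \<and> a (SOME j. j \<in> J \<and> a j = \<alpha> i) = \<alpha> i"
      by (rule someI_ex[OF ex])
    then show ?thesis unfolding \<beta>_def by blast
  qed
  have img: "\<alpha> ` {..<\<kappa>} = A" using bij by (simp add: bij_betw_def)
  have idx: "\<exists>i<\<kappa>. a j = \<alpha> i \<and> b j = \<beta> i" if "j \<in> J" for j
  proof -
    have "a j \<in> \<alpha> ` {..<\<kappa>}" using img that unfolding A_def by blast
    then obtain i where i: "i < \<kappa>" "a j = \<alpha> i" by auto
    obtain j0 where "j0 \<in> J" "a j0 = \<alpha> i" "b j0 = \<beta> i" using rep_i[OF i(1)] by blast
    then have "b j = \<beta> i" using Bsame[OF that, of j0] i by simp
    then show ?thesis using i by blast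
  qed
  have UB: "\<psi> y \<le> \<alpha> i \<bullet> y + \<beta> i" if ik: "i < \<kappa>" and yS: "y \<in> S" for i y
  proof -
    obtain j where j: "j \<in> J" "a j = \<alpha> i" "b j = \<beta> i" using rep_i[OF ik] by blast
    show ?thesis using UB0[OF j(1) yS] j by simp
  qed
  have adist: "i = i'" if "i < \<kappa>" "i' < \<kappa>" "\<alpha> i = \<alpha> i'" for i i'
    using bij that unfolding bij_betw_def inj_on_def by auto
  define C where "C i = {x \<in> S. \<forall>i'<\<kappa>. \<alpha> i \<bullet> x + \<beta> i \<le> \<alpha> i' \<bullet> x + \<beta> i'}" for i
  have CS: "C i \<subseteq> S" for i unfolding C_def by blast
  have EsubC: "E j \<subseteq> C i" if "i < \<kappa>" "j \<in> J" "a j = \<alpha> i" "b j = \<beta> i" for i j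
  proof
    fix x assume x: "x \<in> E j"
    have jk: "j < k" using that(2) unfolding J_def by auto
    have xS: "x \<in> S" using x EsubS[OF jk] by blast
    have "\<alpha> i \<bullet> x + \<beta> i \<le> \<alpha> i' \<bullet> x + \<beta> i'" if "i' < \<kappa>" for i'
      using UB[OF that xS] ab[OF jk x] \<open>a j = \<alpha> i\<close> \<open>b j = \<beta> i\<close> by simp
    then show "x \<in> C i" unfolding C_def using xS by blast
  qed
  have Cval: "\<psi> x = \<alpha> i \<bullet> x + \<beta> i" if "i < \<kappa>" "x \<in> C i" for i x
  proof -
    have xS: "x \<in> S" using that(2) CS by blast
    then obtain j where j: "j \<in> J" "x \<in> E j" using coverJ by blast
    have jk: "j < k" using j(1) unfolding J_def by auto
    obtain i'' where i'': "i'' < \<kappa>" "a j = \<alpha> i''" "b j = \<beta> i''" using idx[OF j(1)] by blast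
    have "\<psi> x = \<alpha> i'' \<bullet> x + \<beta> i''" using ab[OF jk j(2)] i'' by simp
    moreover have "\<alpha> i \<bullet> x + \<beta> i \<le> \<alpha> i'' \<bullet> x + \<beta> i''" using that(2) i''(1) unfolding C_def by blast
    moreover have "\<psi> x \<le> \<alpha> i \<bullet> x + \<beta> i" by (rule UB[OF that(1) xS])
    ultimately show ?thesis by linarith
  qed
  have Cf: "f x = exp (\<alpha> i \<bullet> x + \<beta> i)" if "i < \<kappa>" "x \<in> C i" for i x
  proof -
    have "f x > 0" using fpos that(2) CS by blast
    then have "f x = exp (\<psi> x)" unfolding \<psi>_def by simp
    then show ?thesis using Cval[OF that] by simp
  qed
  have Cun: "S = (\<Union>i<\<kappa>. C i)"
  proof
    show "(\<Union>i<\<kappa>. C i) \<subseteq> S" using CS by blast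
    show "S \<subseteq> (\<Union>i<\<kappa>. C i)"
    proof
      fix x assume "x \<in> S"
      then obtain j where j: "j \<in> J" "x \<in> E j" using coverJ by blast
      obtain i where i: "i < \<kappa>" "a j = \<alpha> i" "b j = \<beta> i" using idx[OF j(1)] by blast
      then show "x \<in> (\<Union>i<\<kappa>. C i)" using EsubC[OF i(1) j(1) i(2,3)] j(2) by blast
    qed
  qed
  have Cint: "interior (C i) \<noteq> {}" if ik: "i < \<kappa>" for i
  proof -
    obtain j where j: "j \<in> J" "a j = \<alpha> i" "b j = \<beta> i" using rep_i[OF ik] by blast
    then have "interior (E j) \<noteq> {}" unfolding J_def by auto
    moreover have "interior (E j) \<subseteq> interior (C i)" using EsubC[OF ik j] by (rule interior_mono)
    ultimately show ?thesis by blast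
  qed
  define H where "H i i' = {x. (\<alpha> i - \<alpha> i') \<bullet> x \<le> \<beta> i' - \<beta> i}" for i i'
  have Ceq: "C i = S \<inter> \<Inter>(H i ` {..<\<kappa>})" for i
    unfolding C_def H_def by (auto simp: inner_diff_left algebra_simps)
  have Cpoly: "polyhedron (C i)" for i
    unfolding Ceq using Spoly by (intro polyhedron_Int polyhedron_Inter) (auto simp: H_def polyhedron_halfspace_le)
  have Cconv: "convex (C i)" for i using Cpoly[of i] by (rule polyhedron_imp_convex)
  have Cclosed: "closed (C i)" for i using Cpoly[of i] by (rule polyhedron_imp_closed)
  have CC: "C i \<inter> C j = C i \<inter> {x. (\<alpha> i - \<alpha> j) \<bullet> x = \<beta> j - \<beta> i}" if "i < \<kappa>" "j < \<kappa>" for i j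
  proof
    show "C i \<inter> C j \<subseteq> C i \<inter> {x. (\<alpha> i - \<alpha> j) \<bullet> x = \<beta> j - \<beta> i}"
    proof
      fix x assume x: "x \<in> C i \<inter> C j"
      have "\<alpha> i \<bullet> x + \<beta> i \<le> \<alpha> j \<bullet> x + \<beta> j" using x that(2) unfolding C_def by blast
      moreover have "\<alpha> j \<bullet> x + \<beta> j \<le> \<alpha> i \<bullet> x + \<beta> i" using x that(1) unfolding C_def by blast
      ultimately have "(\<alpha> i - \<alpha> j) \<bullet> x = \<beta> j - \<beta> i" by (simp add: inner_diff_left)
      then show "x \<in> C i \<inter> {x. (\<alpha> i - \<alpha> j) \<bullet> x = \<beta> j - \<beta> i}" using x by blast
    qed
    show "C i \<inter> {x. (\<alpha> i - \<alpha> j) \<bullet> x = \<beta> j - \<beta> i} \<subseteq> C i \<inter> C j"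
    proof
      fix x assume x: "x \<in> C i \<inter> {x. (\<alpha> i - \<alpha> j) \<bullet> x = \<beta> j - \<beta> i}"
      then have eq: "\<alpha> j \<bullet> x + \<beta> j = \<alpha> i \<bullet> x + \<beta> i" by (simp add: inner_diff_left algebra_simps)
      have xS: "x \<in> S" and le: "\<And>i'. i' < \<kappa> \<Longrightarrow> \<alpha> i \<bullet> x + \<beta> i \<le> \<alpha> i' \<bullet> x + \<beta> i'"
        using x unfolding C_def by auto
      have "\<alpha> j \<bullet> x + \<beta> j \<le> \<alpha> i' \<bullet> x + \<beta> i'" if "i' < \<kappa>" for i'
        using le[OF that] eq by simp
      then have "x \<in> C j" unfolding C_def using xS by blast
      then show "x \<in> C i \<inter> C j" using x by blast
    qed
  qed
  have Chs: "\<forall>x\<in>C i. (\<alpha> i - \<alpha> j) \<bullet> x \<le> \<beta> j - \<beta> i" if "j < \<kappa>" for i j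
  proof
    fix x assume "x \<in> C i"
    then have "\<alpha> i \<bullet> x + \<beta> i \<le> \<alpha> j \<bullet> x + \<beta> j" using that unfolding C_def by blast
    then show "(\<alpha> i - \<alpha> j) \<bullet> x \<le> \<beta> j - \<beta> i" by (simp add: inner_diff_left)
  qed
  have Cface: "(C i \<inter> C j) face_of C i" if "i < \<kappa>" "j < \<kappa>" for i j
  proof -
    have "(C i \<inter> {x. (\<alpha> i - \<alpha> j) \<bullet> x = \<beta> j - \<beta> i}) face_of C i"
      by (rule face_of_Int_supporting_hyperplane_le[OF Cconv]) (use Chs[OF that(2)] in blast)
    then show ?thesis using CC[OF that] by simp
  qed
  have Cface2: "(C i \<inter> C j) face_of C j" if "i < \<kappa>" "j < \<kappa>" for i j
    using Cface[OF that(2,1)] by (simp add: Int_commute)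
  have kle: "\<kappa> \<le> k"
  proof -
    have "\<kappa> \<le> card J" unfolding \<kappa>_def A_def by (rule card_image_le[OF finJ])
    also have "\<dots> \<le> card {..<k}" by (rule card_mono[OF _ Jk]) simp
    finally show ?thesis by simp
  qed
  have CPcal: "C i \<in> Pcal" if "i < \<kappa>" for i
    unfolding Pcal_def using Cpoly[of i] Cint[OF that] by blast
  have AR: "affine_rep f \<kappa> \<alpha> \<beta> C"
    unfolding affine_rep_def subdivision_def
  proof (intro conjI allI impI)
    show "supp f = (\<Union>j<\<kappa>. C j)" using Cun unfolding S_def .
  qed (use CPcal Cface Cface2 Cf adist in auto)
  have R: "rep S f \<kappa> \<alpha> \<beta> C"
    unfolding rep_def
  proof (intro conjI allI impI)
    show "S = (\<Union>j<\<kappa>. C j)" by (rule Cun)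
  qed (use Cclosed Cconv Cint Cf adist in auto)
  have uniq: "\<kappa>' = \<kappa> \<and> (\<exists>\<sigma>. bij_betw \<sigma> {..<\<kappa>} {..<\<kappa>'} \<and>
          (\<forall>j<\<kappa>. \<alpha>' (\<sigma> j) = \<alpha> j \<and> \<beta>' (\<sigma> j) = \<beta> j \<and> E' (\<sigma> j) = C j))"
    if AR': "affine_rep f \<kappa>' \<alpha>' \<beta>' E'" for \<kappa>' \<alpha>' \<beta>' E'
  proof -
    have sd: "subdivision (supp f) \<kappa>' E'" and v: "\<forall>j<\<kappa>'. \<forall>x\<in>E' j. f x = exp (\<alpha>' j \<bullet> x + \<beta>' j)"
      and d: "\<forall>i<\<kappa>'. \<forall>j<\<kappa>'. i \<noteq> j \<longrightarrow> \<alpha>' i \<noteq> \<alpha>' j"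
      using AR' unfolding affine_rep_def by blast+
    have P': "\<forall>j<\<kappa>'. E' j \<in> Pcal" and U': "supp f = (\<Union>j<\<kappa>'. E' j)"
      using sd unfolding subdivision_def by blast+
    have R': "rep S f \<kappa>' \<alpha>' \<beta>' E'"
      unfolding rep_def
    proof (intro conjI allI impI)
      show "S = (\<Union>j<\<kappa>'. E' j)" using U' unfolding S_def .
      fix j assume j: "j < \<kappa>'"
      then have "polyhedron (E' j)" "interior (E' j) \<noteq> {}" using P' unfolding Pcal_def by auto
      then show "closed (E' j)" "convex (E' j)" "interior (E' j) \<noteq> {}"
        by (auto intro: polyhedron_imp_closed polyhedron_imp_convex)
    qed (use v d in auto)
    show ?thesis by (rule rep_unique[OF R R'])
  qed
  have facets: "C j \<in> Pcal_m (k + m - 1)" if Sm: "supp f \<in> Pcal_m m" and j: "j < \<kappa>" for m j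
  proof -
    have fS: "card {F. F facet_of S} \<le> m"
      using Sm facets_eq[OF Spoly] unfolding Pcal_m_def S_def by auto
    obtain FS where finFS: "finite FS" and FSeq: "S = affine hull S \<inter> \<Inter>FS"
      and FShs: "\<And>h. h \<in> FS \<Longrightarrow> \<exists>a b. a \<noteq> 0 \<and> h = {x. a \<bullet> x \<le> b}"
      and cFS: "card FS = card {C. C facet_of S}"
      using facets_card_min[OF Spoly] by blast
    have aff: "affine hull S = UNIV" by (rule affine_hull_nonempty_interior[OF Sint])
    have SFS: "S = \<Inter>FS" using FSeq[unfolded aff] by simp
    define I where "I = {..<\<kappa>} - {j}"
    define G where "G = FS \<union> H j ` I"
    have finG: "finite G" unfolding G_def I_def using finFS by simp
    have HU: "H j j = UNIV" unfolding H_def by simp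
    have "\<Inter>(H j ` {..<\<kappa>}) = \<Inter>(H j ` I)"
    proof -
      have "{..<\<kappa>} = insert j I" unfolding I_def using j by auto
      then show ?thesis using HU by simp
    qed
    then have CG: "C j = \<Inter>G" unfolding G_def using Ceq[of j] SFS by (simp add: Inter_Un_distrib)
    have Ghs: "\<exists>a b. a \<noteq> 0 \<and> h = {x. a \<bullet> x \<le> b}" if hG: "h \<in> G" for h
    proof (cases "h \<in> FS")
      case True then show ?thesis by (rule FShs)
    next
      case False
      then obtain i' where i': "i' \<in> I" "h = H j i'" using hG unfolding G_def by blast
      have "\<alpha> j - \<alpha> i' \<noteq> 0" using i'(1) adist[OF j, of i'] unfolding I_def by auto
      then show ?thesis using i'(2) unfolding H_def by blast
    qed
    have "card {F. F facet_of C j} \<le> card G"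
      by (rule facet_card_le[OF finG CG Ghs Cint[OF j]])
    also have "\<dots> \<le> card FS + card (H j ` I)" unfolding G_def by (rule card_Un_le)
    also have "\<dots> \<le> m + (\<kappa> - 1)"
    proof -
      have "card (H j ` I) \<le> card I" by (rule card_image_le) (simp add: I_def)
      also have "card I = \<kappa> - 1" unfolding I_def using j by simp
      finally show ?thesis using fS cFS by simp
    qed
    also have "\<dots> \<le> k + m - 1" using kle j by simp
    finally have cle: "card {F. F facet_of C j} \<le> k + m - 1" .
    have feq: "{F. is_facet (C j) F} = {F. F facet_of C j}" by (rule facets_eq[OF Cpoly])
    have "finite {F. F facet_of C j}" by (rule finite_polyhedron_facets[OF Cpoly])
    then show ?thesis
      unfolding Pcal_m_def using CPcal[OF j] cle feq by simp
  qed
  have U: "\<forall>\<kappa>' \<alpha>' \<beta>' E'. affine_rep f \<kappa>' \<alpha>' \<beta>' E' \<longrightarrow>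
        \<kappa>' = \<kappa> \<and> (\<exists>\<sigma>. bij_betw \<sigma> {..<\<kappa>} {..<\<kappa>'} \<and>
          (\<forall>j<\<kappa>. \<alpha>' (\<sigma> j) = \<alpha> j \<and> \<beta>' (\<sigma> j) = \<beta> j \<and> E' (\<sigma> j) = C j))"
    by (intro allI impI) (rule uniq)
  have FF: "\<forall>m::nat. supp f \<in> Pcal_m m \<longrightarrow> (\<forall>j<\<kappa>. C j \<in> Pcal_m (k + m - 1))"
    by (intro allI impI) (rule facets)
  show ?thesis
    by (rule exI[of _ \<kappa>], rule exI[of _ \<alpha>], rule exI[of _ \<beta>], rule exI[of _ C]) (intro conjI kle AR U FF)

qed


end
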